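(* Let $\mathcal{H}$ be a complex Hilbert space. If $T\in\mathbb{B}(\mathcal{H})$ is normal, then $\Omega(T) = \sqrt{2}\|T\|$.
   Context: $\mathbb{B}(\mathcal{H})$ is the algebra of bounded linear operators on $\mathcal{H}$ and $\|\cdot\|$ the usual operator norm. Dragomir's norm is $\Omega(T)=\sup\{\|\zeta T+\eta T^*\|:\ \zeta,\eta\in\mathbb{C},\ |\zeta|^2+|\eta|^2\le 1\}$. *)

theory Defs
  imports "HOL-Analysis.Analysis"
begin

class complex_inner = real_normed_vector +
  fixes scaleC :: "complex \<Rightarrow> 'a \<Rightarrow> 'a"
    and cinner :: "'a \<Rightarrow> 'a \<Rightarrow> complex"
  assumes scaleC_add_right: "scaleC a (x + y) = scaleC a x + scaleC a y"
    and scaleC_add_left: "scaleC (a + b) x = scaleC a x + scaleC b x"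
    and scaleC_scaleC: "scaleC a (scaleC b x) = scaleC (a * b) x"
    and scaleC_one: "scaleC 1 x = x"
    and scaleR_scaleC: "scaleR r x = scaleC (complex_of_real r) x"
    and cinner_commute: "cinner x y = cnj (cinner y x)"
    and cinner_add_right: "cinner x (y + z) = cinner x y + cinner x z"
    and cinner_scaleC_right: "cinner x (scaleC a y) = a * cinner x y"
    and cinner_ge_zero: "0 \<le> Re (cinner x x)"
    and norm_eq_sqrt_cinner: "norm x = sqrt (Re (cinner x x))"

class chilbert_space = complex_inner + complete_space

definition bounded_clinear :: "('a::complex_inner \<Rightarrow> 'a) \<Rightarrow> bool" where
  "bounded_clinear T \<longleftrightarrow>
     (\<forall>x y. T (x + y) = T x + T y) \<and>
     (\<forall>c x. T (scaleC c x) = scaleC c (T x)) \<and>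
     (\<exists>K. \<forall>x. norm (T x) \<le> norm x * K)"

definition is_adjoint :: "('a::complex_inner \<Rightarrow> 'a) \<Rightarrow> ('a \<Rightarrow> 'a) \<Rightarrow> bool" where
  "is_adjoint T S \<longleftrightarrow> (\<forall>x y. cinner (T x) y = cinner x (S y))"

text \<open>Dragomir's norm \<Omega>(T), where S = T*. The operator norm is the library's onorm.\<close>
definition dragomir_norm :: "('a::complex_inner \<Rightarrow> 'a) \<Rightarrow> ('a \<Rightarrow> 'a) \<Rightarrow> real" where
  "dragomir_norm T S =
     Sup {onorm (\<lambda>x. scaleC \<zeta> (T x) + scaleC \<eta> (S x)) | \<zeta> \<eta>.
            (cmod \<zeta>)\<^sup>2 + (cmod \<eta>)\<^sup>2 \<le> 1}"

end

theory Submission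
  imports Defs
begin

context complex_inner begin

lemma cinner_add_left: "cinner (x + y) z = cinner x z + cinner y z"
proof -
  have "cinner (x + y) z = cnj (cinner z (x + y))" by (rule cinner_commute)
  also have "\<dots> = cnj (cinner z x) + cnj (cinner z y)" by (simp add: cinner_add_right)
  also have "cnj (cinner z x) = cinner x z" by (rule cinner_commute[symmetric])
  also have "cnj (cinner z y) = cinner y z" by (rule cinner_commute[symmetric])
  finally show ?thesis .
qed

lemma cinner_scaleC_left: "cinner (scaleC a x) y = cnj a * cinner x y"
proof -
  have "cinner (scaleC a x) y = cnj (cinner y (scaleC a x))" by (rule cinner_commute)
  also have "\<dots> = cnj a * cnj (cinner y x)" by (simp add: cinner_scaleC_right)
  also have "cnj (cinner y x) = cinner x y" by (rule cinner_commute[symmetric])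
  finally show ?thesis .
qed

lemma cinner_zero_right[simp]: "cinner x 0 = 0"
  using cinner_add_right[of x 0 0] by simp

lemma cinner_zero_left[simp]: "cinner 0 x = 0"
  using cinner_add_left[of 0 0 x] by simp

lemma cinner_minus_right: "cinner x (- y) = - cinner x y"
proof -
  have "cinner x y + cinner x (-y) = 0" using cinner_add_right[of x y "-y"] by simp
  moreover have "cinner x (-y) = (cinner x y + cinner x (-y)) - cinner x y" by simp
  ultimately show ?thesis by simp
qed

lemma cinner_minus_left: "cinner (- x) y = - cinner x y"
proof -
  have "cinner x y + cinner (-x) y = 0" using cinner_add_left[of x "-x" y] by simp
  moreover have "cinner (-x) y = (cinner x y + cinner (-x) y) - cinner x y" by simp
  ultimately show ?thesis by simp
qed

lemma cinner_diff_right: "cinner x (y - z) = cinner x y - cinner x z"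
  using cinner_add_right[of x y "-z"] by (simp add: cinner_minus_right)

lemma cinner_diff_left: "cinner (x - y) z = cinner x z - cinner y z"
  using cinner_add_left[of x "-y" z] by (simp add: cinner_minus_left)

lemma cinner_self: "cinner x x = complex_of_real ((norm x)^2)"
proof -
  have "Im (cinner x x) = 0" using arg_cong[OF cinner_commute[of x x], of Im] by simp
  moreover have "Re (cinner x x) = (norm x)^2" using norm_eq_sqrt_cinner[of x] cinner_ge_zero[of x] by simp
  ultimately show ?thesis by (simp add: complex_eq_iff)
qed

lemma norm_sq_Re: "(norm x)^2 = Re (cinner x x)"
  using cinner_self[of x] by simp

lemma scaleC_zero_right[simp]: "scaleC a 0 = 0"
  using scaleC_add_right[of a 0 0] by simp

lemma scaleC_zero_left[simp]: "scaleC 0 x = 0"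
  using scaleC_add_left[of 0 0 x] by simp

lemma scaleC_minus_right: "scaleC a (- x) = - scaleC a x"
proof -
  have "scaleC a x + scaleC a (-x) = 0" using scaleC_add_right[of a x "-x"] by simp
  then show ?thesis by (rule add_eq_0_iff[THEN iffD1])
qed

lemma scaleC_diff_right: "scaleC a (x - y) = scaleC a x - scaleC a y"
  using scaleC_add_right[of a x "-y"] by (simp add: scaleC_minus_right)

lemma scaleC_diff_left: "scaleC (a - b) x = scaleC a x - scaleC b x"
  using scaleC_add_left[of "a - b" b x] by (simp add: eq_diff_eq)

lemma scaleC_sum_right: "scaleC a (sum f A) = (\<Sum>i\<in>A. scaleC a (f i))"
  by (induction A rule: infinite_finite_induct) (auto simp: scaleC_add_right)

lemma cinner_sum_right: "cinner x (sum f A) = (\<Sum>i\<in>A. cinner x (f i))"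
  by (induction A rule: infinite_finite_induct) (auto simp: cinner_add_right)

lemma cinner_sum_left: "cinner (sum f A) x = (\<Sum>i\<in>A. cinner (f i) x)"
  by (induction A rule: infinite_finite_induct) (auto simp: cinner_add_left)

lemma norm_scaleC: "norm (scaleC a x) = cmod a * norm x"
proof -
  have e: "cinner (scaleC a x) (scaleC a x) = cnj a * a * cinner x x"
    by (simp add: cinner_scaleC_left cinner_scaleC_right mult.assoc)
  have "(norm (scaleC a x))^2 = Re (cnj a * a * cinner x x)"
    unfolding norm_sq_Re e ..
  also have "\<dots> = (cmod a)^2 * (norm x)^2"
  proof -
    have "cnj a * a = complex_of_real ((cmod a)^2)" by (simp only: complex_norm_square mult.commute)
    then show ?thesis by (simp add: cinner_self)
  qed
  finally have "(norm (scaleC a x))^2 = (cmod a * norm x)^2" by (simp add: power_mult_distrib)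
  then show ?thesis by (simp add: power2_eq_iff_nonneg)
qed

lemma norm_add_sq: "(norm (x + y))^2 = (norm x)^2 + 2 * Re (cinner x y) + (norm y)^2"
proof -
  have "Re (cinner y x) = Re (cinner x y)" by (subst cinner_commute) simp
  then show ?thesis by (simp add: norm_sq_Re cinner_add_left cinner_add_right)
qed

lemma norm_diff_sq: "(norm (x - y))^2 = (norm x)^2 - 2 * Re (cinner x y) + (norm y)^2"
  using norm_add_sq[of x "-y"] by (simp add: cinner_minus_right)

lemma Re_cinner_le: "Re (cinner x y) \<le> norm x * norm y"
proof -
  have "(norm (x + y))^2 \<le> (norm x + norm y)^2"
    by (simp add: power_mono norm_triangle_ineq)
  then show ?thesis by (simp add: norm_add_sq power2_sum)
qed

lemma cinner_cauchy: "cmod (cinner x y) \<le> norm x * norm y"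
proof (cases "cinner x y = 0")
  case True then show ?thesis by simp
next
  case False
  define c where "c = cnj (cinner x y) / cmod (cinner x y)"
  have "cinner x (scaleC c y) = cnj (cinner x y) * cinner x y / cmod (cinner x y)"
    by (simp add: c_def cinner_scaleC_right)
  also have "\<dots> = complex_of_real ((cmod (cinner x y))^2) / cmod (cinner x y)"
    by (simp only: complex_norm_square mult.commute)
  also have "\<dots> = complex_of_real (cmod (cinner x y))"
    using False by (simp add: power2_eq_square)
  finally have 1: "cinner x (scaleC c y) = complex_of_real (cmod (cinner x y))" .
  moreover have "cmod c = 1" using False by (simp add: c_def norm_divide)
  show ?thesis using Re_cinner_le[of x "scaleC c y"] 1 \<open>cmod c = 1\<close> by (simp add: norm_scaleC)
qed

end

lemma cinner_ext:
  fixes a b :: "'a::complex_inner"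
  assumes "\<And>w. cinner w a = cinner w b" shows "a = b"
proof -
  have "cinner (a - b) (a - b) = 0" using assms[of "a - b"] by (simp add: cinner_diff_right)
  then have "norm (a - b) = 0" by (simp add: cinner_self)
  then show ?thesis by simp
qed

lemma bclin_add: "bounded_clinear T \<Longrightarrow> T (x + y) = T x + T y"
  by (simp add: bounded_clinear_def)
lemma bclin_scaleC: "bounded_clinear T \<Longrightarrow> T (scaleC c x) = scaleC c (T x)"
  by (simp add: bounded_clinear_def)
lemma bclin_bl: assumes "bounded_clinear T" shows "bounded_linear T"
proof -
  obtain K where K: "\<forall>x. norm (T x) \<le> norm x * K" using assms by (auto simp: bounded_clinear_def)
  show ?thesis
    by (rule bounded_linear_intro[of _ K]) (auto simp: bclin_add[OF assms] bclin_scaleC[OF assms]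
        scaleR_scaleC K)
qed

lemma adj_eq:
  fixes T S :: "'a::complex_inner \<Rightarrow> 'a"
  assumes "is_adjoint T S"
  shows "cinner x (S y) = cinner (T x) y"
  using assms unfolding is_adjoint_def by simp

lemma adj_norm_eq:
  fixes T S :: "'a::complex_inner \<Rightarrow> 'a"
  assumes "is_adjoint T S" "T \<circ> S = S \<circ> T"
  shows "norm (S z) = norm (T z)"
proof -
  have ts: "T (S z) = S (T z)" using fun_cong[OF assms(2), of z] by simp
  have 1: "cinner (S z) (S z) = cinner (S (T z)) z"
    using adj_eq[OF assms(1), of "S z" z] ts by simp
  have 2: "cinner (T z) (T z) = cnj (cinner (S (T z)) z)"
    using adj_eq[OF assms(1), of z "T z"] cinner_commute[of z "S (T z)"] by simp
  have "(norm (S z))^2 = (norm (T z))^2"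
    unfolding norm_sq_Re 1 2 by simp
  then show ?thesis by (simp add: power2_eq_iff_nonneg)
qed

lemma adj_add:
  fixes T S :: "'a::complex_inner \<Rightarrow> 'a"
  assumes "is_adjoint T S"
  shows "S (x + y) = S x + S y"
  by (rule cinner_ext) (simp add: adj_eq[OF assms] cinner_add_right)

lemma adj_scaleC:
  fixes T S :: "'a::complex_inner \<Rightarrow> 'a"
  assumes "is_adjoint T S"
  shows "S (scaleC c x) = scaleC c (S x)"
  by (rule cinner_ext) (simp add: adj_eq[OF assms] cinner_scaleC_right)

lemma comb_bl:
  fixes T S :: "'a::complex_inner \<Rightarrow> 'a"
  assumes "bounded_clinear T" "is_adjoint T S" "T \<circ> S = S \<circ> T"
  shows "bounded_linear (\<lambda>x. scaleC z (T x) + scaleC w (S x))"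
proof -
  obtain K where K: "\<forall>x. norm (T x) \<le> norm x * K" using assms by (auto simp: bounded_clinear_def)
  have sc: "scaleC a (scaleC (complex_of_real r) v) = scaleC (complex_of_real r) (scaleC a v)" for a r and v :: 'a
    by (simp add: scaleC_scaleC mult.commute)
  show ?thesis
  proof (rule bounded_linear_intro[of _ "(cmod z + cmod w) * K"])
    fix x y show "scaleC z (T (x + y)) + scaleC w (S (x + y)) =
       scaleC z (T x) + scaleC w (S x) + (scaleC z (T y) + scaleC w (S y))"
      by (simp add: bclin_add[OF assms(1)] adj_add[OF assms(2)] scaleC_add_right algebra_simps)
  next
    fix r x show "scaleC z (T (scaleR r x)) + scaleC w (S (scaleR r x)) =
       scaleR r (scaleC z (T x) + scaleC w (S x))"
      by (simp add: scaleR_scaleC bclin_scaleC[OF assms(1)] adj_scaleC[OF assms(2)] scaleC_add_right sc)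
  next
    fix x
    have "norm (scaleC z (T x) + scaleC w (S x)) \<le> cmod z * norm (T x) + cmod w * norm (T x)"
      using norm_triangle_ineq[of "scaleC z (T x)" "scaleC w (S x)"]
      by (simp add: norm_scaleC adj_norm_eq[OF assms(2,3)])
    also have "\<dots> \<le> cmod z * (norm x * K) + cmod w * (norm x * K)"
      using K by (intro add_mono mult_left_mono) auto
    finally show "norm (scaleC z (T x) + scaleC w (S x)) \<le> norm x * ((cmod z + cmod w) * K)"
      by (simp add: algebra_simps)
  qed
qed

lemma normal_shift:
  fixes T S :: "'a::complex_inner \<Rightarrow> 'a"
  assumes "is_adjoint T S" "T \<circ> S = S \<circ> T"
  shows "norm (S z - scaleC (cnj c) z) = norm (T z - scaleC c z)"
proof -
  have e1: "cinner (S z) z = cnj (cinner (T z) z)"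
    using adj_eq[OF assms(1), of z z] cinner_commute[of "S z" z] by simp
  have "Re (cinner (S z) (scaleC (cnj c) z)) = Re (cinner (T z) (scaleC c z))"
    by (simp add: cinner_scaleC_right e1)
  then have "(norm (S z - scaleC (cnj c) z))^2 = (norm (T z - scaleC c z))^2"
    by (simp add: norm_diff_sq norm_scaleC adj_norm_eq[OF assms])
  then show ?thesis by (simp add: power2_eq_iff_nonneg)
qed


lemma pow_logconvex:
  fixes T S :: "'a::complex_inner \<Rightarrow> 'a"
  assumes "is_adjoint T S" "T \<circ> S = S \<circ> T"
  shows "(norm ((T^^Suc k) y))^2 \<le> norm ((T^^k) y) * norm ((T^^Suc (Suc k)) y)"
proof -
  let ?p = "(T^^k) y" and ?q = "(T^^Suc k) y"
  have q: "?q = T ?p" by simp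
  have "(norm ?q)^2 = Re (cinner (T ?p) ?q)" by (simp add: norm_sq_Re)
  also have "\<dots> = Re (cinner ?p (S ?q))" by (simp add: adj_eq[OF assms(1)])
  also have "\<dots> \<le> cmod (cinner ?p (S ?q))" by (rule complex_Re_le_cmod)
  also have "\<dots> \<le> norm ?p * norm (S ?q)" by (rule cinner_cauchy)
  also have "norm (S ?q) = norm (T ?q)" by (rule adj_norm_eq[OF assms])
  also have "T ?q = (T^^Suc (Suc k)) y" by simp
  finally show ?thesis .
qed

lemma pow_growth:
  fixes T S :: "'a::complex_inner \<Rightarrow> 'a"
  assumes "is_adjoint T S" "T \<circ> S = S \<circ> T" "norm y = 1"
  shows "norm (T y) * norm ((T^^k) y) \<le> norm ((T^^Suc k) y)"
proof (induction k)
  case 0 then show ?case using assms(3) by simp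
next
  case (Suc k)
  let ?a = "\<lambda>k. norm ((T^^k) y)"
  have lc: "(?a (Suc k))^2 \<le> ?a k * ?a (Suc (Suc k))" by (rule pow_logconvex[OF assms(1,2)])
  show ?case
  proof (cases "?a (Suc k) = 0")
    case True then show ?thesis by simp
  next
    case False
    then have pos: "?a (Suc k) > 0" by simp
    show ?thesis
    proof (cases "?a k = 0")
      case True
      then have "(?a (Suc k))^2 \<le> 0" using lc by simp
      then show ?thesis using False by simp
    next
      case False
      then have ak: "?a k > 0" by simp
      have "?a k * (norm (T y) * ?a (Suc k)) \<le> ?a (Suc k) * ?a (Suc k)"
        using Suc.IH pos by (simp add: mult.commute mult_right_mono)
      also have "\<dots> \<le> ?a k * ?a (Suc (Suc k))" using lc by (simp add: power2_eq_square)
      finally show ?thesis using ak by simp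
    qed
  qed
qed

lemma pow_lower:
  fixes T S :: "'a::complex_inner \<Rightarrow> 'a"
  assumes "is_adjoint T S" "T \<circ> S = S \<circ> T" "norm y = 1"
  shows "(norm (T y))^k \<le> norm ((T^^k) y)"
proof (induction k)
  case 0 then show ?case using assms(3) by simp
next
  case (Suc k)
  have "(norm (T y))^Suc k = norm (T y) * (norm (T y))^k" by simp
  also have "\<dots> \<le> norm (T y) * norm ((T^^k) y)" using Suc.IH by (simp add: mult_left_mono)
  also have "\<dots> \<le> norm ((T^^Suc k) y)" by (rule pow_growth[OF assms])
  finally show ?case .
qed

lemma pow_upper:
  fixes T :: "'a::real_normed_vector \<Rightarrow> 'a"
  assumes "bounded_linear T"
  shows "norm ((T^^k) y) \<le> onorm T ^ k * norm y"
proof (induction k)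
  case 0 then show ?case by simp
next
  case (Suc k)
  have "norm ((T^^Suc k) y) = norm (T ((T^^k) y))" by simp
  also have "\<dots> \<le> onorm T * norm ((T^^k) y)" by (rule onorm[OF assms])
  also have "\<dots> \<le> onorm T * (onorm T ^ k * norm y)"
    using Suc.IH onorm_pos_le[OF assms] by (simp add: mult_left_mono)
  finally show ?case by simp
qed

lemma root_sum:
  assumes "k < n" "l < n"
  defines "w \<equiv> cis (2 * pi / real n)"
  shows "(\<Sum>j<n. (cnj w ^ k * w ^ l) ^ j) = (if k = l then of_nat n else 0)"
proof -
  have n: "n > 0" using assms by simp
  define z where "z = cnj w ^ k * w ^ l"
  have "z = cis (real k * (- (2 * pi / real n))) * cis (real l * (2 * pi / real n))"
    by (simp only: z_def w_def cis_cnj Complex.DeMoivre)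
  also have "\<dots> = cis (real k * (- (2 * pi / real n)) + real l * (2 * pi / real n))"
    by (rule cis_mult)
  also have "real k * (- (2 * pi / real n)) + real l * (2 * pi / real n) = 2 * pi * (real l - real k) / real n"
    using n by (simp add: field_simps)
  finally have z: "z = cis (2 * pi * (real l - real k) / real n)" .
  show ?thesis
  proof (cases "k = l")
    case True
    then have "z = 1" by (simp add: z)
    then have "cnj w ^ k * w ^ l = 1" by (simp add: z_def)
    then show ?thesis using True by simp
  next
    case False
    have zn: "z ^ n = 1"
    proof -
      have "z ^ n = cis (2 * pi * (real l - real k))" using n by (simp add: z Complex.DeMoivre)
      also have "\<dots> = 1" by (rule cis_multiple_2pi) (simp add: Ints_diff)
      finally show ?thesis .
    qed
    have z1: "z \<noteq> 1"
    proof
      assume "z = 1"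
      then have "Re z = 1" by simp
      then have "cos (2 * pi * (real l - real k) / real n) = 1" by (simp add: z)
      then obtain m :: int where m: "2 * pi * (real l - real k) / real n = real_of_int m * 2 * pi"
        using cos_one_2pi_int by blast
      then have "(2 * pi) * (real l - real k) = (2 * pi) * (real_of_int m * real n)"
        using n by (simp add: field_simps)
      then have "real l - real k = real_of_int m * real n"
        by (subst (asm) mult_cancel_left) simp
      then have "real_of_int (int l - int k) = real_of_int (m * int n)" by simp
      then have e: "int l - int k = m * int n" by (rule of_int_eq_iff[THEN iffD1])
      have b: "int l - int k < int n" "int l - int k > - int n" using assms by auto
      have "m = 0"
      proof (rule ccontr)
        assume "m \<noteq> 0"
        then have "m \<ge> 1 \<or> m \<le> -1" by linarith
        then show False
        proof
          assume "m \<ge> 1"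
          then have "1 * int n \<le> m * int n" by (intro mult_right_mono) auto
          then show False using e b by linarith
        next
          assume "m \<le> -1"
          then have "m * int n \<le> (-1) * int n" by (intro mult_right_mono) auto
          then show False using e b by linarith
        qed
      qed
      then show False using e False by simp
    qed
    have "(\<Sum>j<n. z^j) = 0" using z1 zn by (simp add: sum_gp_strict)
    then show ?thesis using False by (simp add: z_def)
  qed
qed


lemma sum_swap3: "(\<Sum>j\<in>A. \<Sum>k\<in>B. \<Sum>l\<in>C. g j k l) = (\<Sum>k\<in>B. \<Sum>l\<in>C. \<Sum>j\<in>A. g j k l)"
proof -
  have "(\<Sum>j\<in>A. \<Sum>k\<in>B. \<Sum>l\<in>C. g j k l) = (\<Sum>k\<in>B. \<Sum>j\<in>A. \<Sum>l\<in>C. g j k l)"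
    by (rule sum.swap)
  also have "\<dots> = (\<Sum>k\<in>B. \<Sum>l\<in>C. \<Sum>j\<in>A. g j k l)"
    by (rule sum.cong[OF refl], rule sum.swap)
  finally show ?thesis .
qed

lemma avg_identity:
  fixes u :: "nat \<Rightarrow> 'a::complex_inner"
  assumes "n > 0"
  defines "w \<equiv> cis (2 * pi / real n)"
  shows "(\<Sum>j<n. (norm (\<Sum>k<n. scaleC ((w^j)^k) (u k)))^2) = real n * (\<Sum>k<n. (norm (u k))^2)"
proof -
  define c where "c k l = cinner (u k) (u l)" for k l
  have pw: "cnj ((w^j)^k) * (w^j)^l = (cnj w ^ k * w ^ l)^j" for j k l :: nat
    by (simp add: power_mult_distrib flip: power_mult) (simp add: mult.commute)
  have ce: "cinner (\<Sum>k<n. scaleC (a k) (u k)) (\<Sum>l<n. scaleC (a l) (u l))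
      = (\<Sum>k<n. \<Sum>l<n. cnj (a k) * a l * c k l)" for a :: "nat \<Rightarrow> complex"
    by (simp add: cinner_sum_left cinner_sum_right cinner_scaleC_left cinner_scaleC_right c_def
        sum_distrib_left mult.assoc) (subst sum.swap, simp add: ac_simps)
  have e: "(norm (\<Sum>k<n. scaleC ((w^j)^k) (u k)))^2
      = Re (\<Sum>k<n. \<Sum>l<n. (cnj w ^ k * w ^ l)^j * c k l)" for j
    unfolding norm_sq_Re ce[of "\<lambda>k. (w^j)^k"] pw ..
  have "(\<Sum>j<n. (norm (\<Sum>k<n. scaleC ((w^j)^k) (u k)))^2)
      = Re (\<Sum>j<n. \<Sum>k<n. \<Sum>l<n. (cnj w ^ k * w ^ l)^j * c k l)"
    by (simp add: e Re_sum)
  also have "(\<Sum>j<n. \<Sum>k<n. \<Sum>l<n. (cnj w ^ k * w ^ l)^j * c k l)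
      = (\<Sum>k<n. \<Sum>l<n. \<Sum>j<n. (cnj w ^ k * w ^ l)^j * c k l)"
    by (rule sum_swap3)
  also have "\<dots> = (\<Sum>k<n. \<Sum>l<n. (\<Sum>j<n. (cnj w ^ k * w ^ l)^j) * c k l)"
    by (simp add: sum_distrib_right)
  also have "\<dots> = (\<Sum>k<n. \<Sum>l<n. (if k = l then of_nat n else 0) * c k l)"
    by (intro sum.cong refl) (simp add: root_sum w_def)
  also have "\<dots> = (\<Sum>k<n. of_nat n * c k k)"
  proof (rule sum.cong[OF refl])
    fix k assume k: "k \<in> {..<n}"
    have "(\<Sum>l<n. (if k = l then of_nat n else 0) * c k l) = (\<Sum>l<n. if k = l then of_nat n * c k l else 0)"
      by (rule sum.cong) auto
    also have "\<dots> = of_nat n * c k k" using k by (simp add: sum.delta)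
    finally show "(\<Sum>l<n. (if k = l then of_nat n else 0) * c k l) = of_nat n * c k k" .
  qed
  finally show ?thesis
    by (simp add: Re_sum c_def cinner_self sum_distrib_left)
qed


lemma bclin_zero: "bounded_clinear T \<Longrightarrow> T 0 = 0"
  using bclin_scaleC[of T 0 0] by simp

lemma bclin_sum: "bounded_clinear T \<Longrightarrow> T (sum f A) = (\<Sum>i\<in>A. T (f i))"
  by (induction A rule: infinite_finite_induct) (auto simp: bclin_add bclin_zero)

lemma approx_eig:
  fixes T S :: "'a::complex_inner \<Rightarrow> 'a"
  assumes bc: "bounded_clinear T" and adj: "is_adjoint T S" and nor: "T \<circ> S = S \<circ> T"
    and Mpos: "onorm T > 0" and epos: "e > 0"
  shows "\<exists>x c. norm x = 1 \<and> cmod c = onorm T \<and> norm (T x - scaleC c x) \<le> e"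
proof -
  define M where "M = onorm T"
  have bl: "bounded_linear T" by (rule bclin_bl[OF bc])
  have M0: "M > 0" using Mpos by (simp add: M_def)
  define n :: nat where "n = nat \<lceil>16 * M^2 / e^2\<rceil> + 1"
  have n0: "n > 0" by (simp add: n_def)
  have nbig: "16 * M^2 / e^2 \<le> real n" unfolding n_def by linarith
  define \<delta> where "\<delta> = 1 / (2 * real n)"
  have d0: "0 < \<delta>" "\<delta> \<le> 1/2" using n0 by (auto simp: \<delta>_def field_simps)
  have "M * (1 - \<delta>) < M" using M0 d0 by simp
  also have "M = (SUP x. norm (T x) / norm x)" by (simp add: M_def onorm_def)
  finally have "\<exists>x\<in>UNIV. M * (1 - \<delta>) < norm (T x) / norm x"
    by (subst (asm) less_cSUP_iff) (auto intro!: bdd_aboveI2 le_onorm[OF bl])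
  then obtain x0 where x0: "M * (1 - \<delta>) < norm (T x0) / norm x0" by blast
  have "M * (1 - \<delta>) > 0" using M0 d0 by simp
  then have x0nz: "x0 \<noteq> 0" using x0 by auto
  define y where "y = scaleC (complex_of_real (1 / norm x0)) x0"
  have ny: "norm y = 1" using x0nz by (simp add: y_def norm_scaleC norm_divide norm_power)
  have Ty: "norm (T y) = norm (T x0) / norm x0"
    by (simp add: y_def bclin_scaleC[OF bc] norm_scaleC norm_divide norm_power)
  define t where "t = norm (T y)"
  have tlow: "M * (1 - \<delta>) \<le> t" using x0 Ty t_def by simp
  define u where "u k = scaleC (complex_of_real (1 / M^k)) ((T^^k) y)" for k
  have nu: "norm (u k) = norm ((T^^k) y) / M^k" for k
    using M0 by (simp add: u_def norm_scaleC norm_divide norm_power)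
  have uup: "norm (u k) \<le> 1" for k
  proof -
    have "norm ((T^^k) y) \<le> M^k" using pow_upper[OF bl, of k y] ny by (simp add: M_def)
    then show ?thesis using M0 by (simp add: nu)
  qed
  have ulow: "norm (u k) \<ge> 1/2" if "k \<le> n" for k
  proof -
    have "(M * (1 - \<delta>))^k \<le> t^k" using tlow M0 d0 by (intro power_mono) auto
    also have "\<dots> \<le> norm ((T^^k) y)" unfolding t_def by (rule pow_lower[OF adj nor ny])
    finally have h: "M^k * (1 - \<delta>)^k \<le> norm ((T^^k) y)" by (simp only: power_mult_distrib)
    have Mk: "M^k > 0" using M0 by simp
    have "(1 - \<delta>)^k \<le> norm (u k)" unfolding nu using h Mk by (simp add: pos_le_divide_eq mult.commute)
    moreover have "(1 - \<delta>)^n \<le> (1 - \<delta>)^k" using that d0 by (intro power_decreasing) auto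
    moreover have "1 + real n * (- \<delta>) \<le> (1 + (- \<delta>))^n" using d0 by (intro Bernoulli_inequality) auto
    moreover have "1 + real n * (- \<delta>) = 1/2" using n0 by (simp add: \<delta>_def)
    ultimately show ?thesis by simp
  qed
  define w where "w = cis (2 * pi / real n)"
  define v where "v j = (\<Sum>k<n. scaleC ((w^j)^k) (u k))" for j
  have avg: "(\<Sum>j<n. (norm (v j))^2) = real n * (\<Sum>k<n. (norm (u k))^2)"
    unfolding v_def w_def by (rule avg_identity[OF n0])
  have "(\<Sum>k<n. (norm (u k))^2) \<ge> (\<Sum>k<n. (1/2)^2)"
    using ulow by (intro sum_mono power_mono) auto
  then have "(\<Sum>j<n. (norm (v j))^2) \<ge> real n * (real n / 4)"
    unfolding avg using n0 by (simp add: power2_eq_square)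
  then obtain j where j: "(norm (v j))^2 \<ge> real n / 4"
  proof -
    assume r: "\<And>j. real n / 4 \<le> (norm (v j))\<^sup>2 \<Longrightarrow> thesis"
    show thesis
    proof (rule ccontr)
      assume "\<not> thesis"
      then have lt: "(norm (v j))^2 < real n / 4" for j using r by (meson not_le)
      have "(\<Sum>j<n. (norm (v j))^2) < of_nat (card {..<n}) * (real n / 4)"
        by (rule sum_bounded_above_strict) (use n0 lt in auto)
      then show False using \<open>(\<Sum>j<n. (norm (v j))^2) \<ge> real n * (real n / 4)\<close> by simp
    qed
  qed
  define d where "d = w^j"
  have nd: "cmod d = 1" by (simp add: d_def w_def norm_power)
  have dd: "cnj d * d = 1"
    using nd complex_norm_square[of d] by (simp add: mult.commute)
  define c where "c = complex_of_real M * cnj d"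
  have nc: "cmod c = M" using M0 nd by (simp add: c_def norm_mult)
  have Tu: "T (u k) = scaleC (complex_of_real M) (u (Suc k))" for k
  proof -
    have "T (u k) = scaleC (complex_of_real (1 / M^k)) ((T^^Suc k) y)"
      by (simp add: u_def bclin_scaleC[OF bc])
    also have "complex_of_real (1 / M^k) = complex_of_real M * complex_of_real (1 / M^Suc k)"
      using M0 by simp
    finally show ?thesis by (simp add: u_def scaleC_scaleC)
  qed
  define f where "f k = scaleC (d^k) (u k)" for k
  have vj: "v j = (\<Sum>k<n. f k)" by (simp add: v_def f_def d_def)
  have Tv: "T (v j) = scaleC c (\<Sum>k<n. f (Suc k))"
  proof -
    have "T (v j) = (\<Sum>k<n. scaleC (d^k) (T (u k)))"
      by (simp add: vj f_def bclin_sum[OF bc] bclin_scaleC[OF bc])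
    also have "\<dots> = (\<Sum>k<n. scaleC c (f (Suc k)))"
    proof (rule sum.cong[OF refl])
      fix k
      have "c * d^Suc k = complex_of_real M * (cnj d * d) * d^k"
        by (simp add: c_def mult.assoc)
      also have "\<dots> = complex_of_real M * d^k" by (simp add: dd)
      finally have cd: "c * d^Suc k = complex_of_real M * d^k" .
      have "scaleC (d^k) (T (u k)) = scaleC (d^k * complex_of_real M) (u (Suc k))"
        by (simp only: Tu scaleC_scaleC)
      also have "d^k * complex_of_real M = c * d^Suc k" by (subst cd) (rule mult.commute)
      also have "scaleC (c * d^Suc k) (u (Suc k)) = scaleC c (f (Suc k))"
        by (simp only: f_def scaleC_scaleC)
      finally show "scaleC (d^k) (T (u k)) = scaleC c (f (Suc k))" .
    qed
    also have "\<dots> = scaleC c (\<Sum>k<n. f (Suc k))" by (simp add: scaleC_sum_right)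
    finally show ?thesis .
  qed
  have diff: "T (v j) - scaleC c (v j) = scaleC c (f n - f 0)"
  proof -
    have "T (v j) - scaleC c (v j) = scaleC c (\<Sum>k<n. f (Suc k)) - scaleC c (\<Sum>k<n. f k)"
      by (simp only: Tv, simp only: vj)
    also have "\<dots> = scaleC c ((\<Sum>k<n. f (Suc k)) - (\<Sum>k<n. f k))"
      by (rule scaleC_diff_right[symmetric])
    also have "(\<Sum>k<n. f (Suc k)) - (\<Sum>k<n. f k) = (\<Sum>k<n. f (Suc k) - f k)"
      by (rule sum_subtractf[symmetric])
    also have "\<dots> = f n - f 0" by (rule sum_lessThan_telescope)
    finally show ?thesis .
  qed
  have ndiff: "norm (T (v j) - scaleC c (v j)) \<le> 2 * M"
  proof -
    have "norm (f n - f 0) \<le> norm (f n) + norm (f 0)" by (rule norm_triangle_ineq4)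
    also have "\<dots> \<le> 2" using uup[of n] uup[of 0] by (simp add: f_def norm_scaleC norm_power nd)
    finally show ?thesis using M0 by (simp add: diff norm_scaleC nc)
  qed
  have nvpos: "norm (v j) > 0"
  proof -
    have "real n / 4 > 0" using n0 by simp
    then have "(norm (v j))^2 > 0" using j by linarith
    show ?thesis
    proof (rule ccontr)
      assume "\<not> norm (v j) > 0"
      then have "norm (v j) = 0" using norm_ge_zero[of "v j"] by linarith
      then show False using \<open>(norm (v j))^2 > 0\<close> by simp
    qed
  qed
  define x where "x = scaleC (complex_of_real (1 / norm (v j))) (v j)"
  have nx: "norm x = 1" using nvpos by (simp add: x_def norm_scaleC norm_divide norm_power)
  have "T x - scaleC c x = scaleC (complex_of_real (1 / norm (v j))) (T (v j) - scaleC c (v j))"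
    by (simp add: x_def bclin_scaleC[OF bc] scaleC_diff_right scaleC_scaleC mult.commute)
  then have ex: "norm (T x - scaleC c x) = norm (T (v j) - scaleC c (v j)) / norm (v j)"
    using nvpos by (simp add: norm_scaleC norm_divide norm_power)
  also have "\<dots> \<le> 2 * M / norm (v j)" using ndiff nvpos by (simp add: divide_right_mono)
  also have "\<dots> \<le> e"
  proof (rule power2_le_imp_le)
    have "(2 * M / norm (v j))^2 = 4 * M^2 / (norm (v j))^2" by (simp add: power_divide power_mult_distrib)
    also have "\<dots> \<le> 4 * M^2 / (real n / 4)"
      using j n0 nvpos by (intro divide_left_mono) (auto intro!: mult_pos_pos)
    also have "\<dots> = 16 * M^2 / real n" by simp
    also have "\<dots> \<le> e^2" using nbig n0 epos by (simp add: field_simps)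
    finally show "(2 * M / norm (v j))^2 \<le> e^2" .
  qed (use epos in simp)
  finally show ?thesis using nx nc by (auto simp: M_def)
qed


theorem corollary3p5:
  fixes T S :: "'a::chilbert_space \<Rightarrow> 'a"
  assumes "bounded_clinear T"
    and "is_adjoint T S"
    and "T \<circ> S = S \<circ> T"
  shows "dragomir_norm T S = sqrt 2 * onorm T"
proof -
  note bc = assms(1) and adj = assms(2) and nor = assms(3)
  define M where "M = onorm T"
  have bl: "bounded_linear T" by (rule bclin_bl[OF bc])
  have M0: "M \<ge> 0" using onorm_pos_le[OF bl] by (simp add: M_def)
  define A where "A = {onorm (\<lambda>x. scaleC \<zeta> (T x) + scaleC \<eta> (S x)) | \<zeta> \<eta>.
            (cmod \<zeta>)\<^sup>2 + (cmod \<eta>)\<^sup>2 \<le> 1}"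
  have D: "dragomir_norm T S = Sup A" by (simp add: dragomir_norm_def A_def)
  have up: "a \<le> sqrt 2 * M" if "a \<in> A" for a
  proof -
    obtain \<zeta> \<eta> where a: "a = onorm (\<lambda>x. scaleC \<zeta> (T x) + scaleC \<eta> (S x))"
      and c: "(cmod \<zeta>)\<^sup>2 + (cmod \<eta>)\<^sup>2 \<le> 1" using \<open>a \<in> A\<close> by (auto simp: A_def)
    have "(cmod \<zeta> + cmod \<eta>)^2 \<le> 2"
    proof -
      have h0: "0 \<le> (cmod \<zeta> - cmod \<eta>)^2" by simp
      have h1: "(cmod \<zeta> + cmod \<eta>)^2 = 2 * ((cmod \<zeta>)\<^sup>2 + (cmod \<eta>)\<^sup>2) - (cmod \<zeta> - cmod \<eta>)^2"
        by (simp add: power2_sum power2_diff)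
      have "(cmod \<zeta> + cmod \<eta>)^2 \<le> 2 * ((cmod \<zeta>)\<^sup>2 + (cmod \<eta>)\<^sup>2)"
        unfolding h1 using h0 by linarith
      also have "\<dots> \<le> 2 * 1" using c by (intro mult_left_mono) auto
      finally show ?thesis by simp
    qed
    then have s: "cmod \<zeta> + cmod \<eta> \<le> sqrt 2" by (rule real_le_rsqrt)
    show ?thesis unfolding a
    proof (rule onorm_bound)
      show "0 \<le> sqrt 2 * M" using M0 by simp
      fix x
      have "norm (scaleC \<zeta> (T x) + scaleC \<eta> (S x)) \<le> cmod \<zeta> * norm (T x) + cmod \<eta> * norm (T x)"
        using norm_triangle_ineq[of "scaleC \<zeta> (T x)" "scaleC \<eta> (S x)"]
        by (simp add: norm_scaleC adj_norm_eq[OF adj nor])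
      also have "\<dots> = (cmod \<zeta> + cmod \<eta>) * norm (T x)" by (simp add: algebra_simps)
      also have "\<dots> \<le> sqrt 2 * (M * norm x)"
        using s onorm[OF bl, of x] by (intro mult_mono) (auto simp: M_def)
      finally show "norm (scaleC \<zeta> (T x) + scaleC \<eta> (S x)) \<le> sqrt 2 * M * norm x" by simp
    qed
  qed
  have bdd: "bdd_above A" unfolding bdd_above_def using up by blast
  have ne: "onorm (\<lambda>x. scaleC 0 (T x) + scaleC 0 (S x)) \<in> A"
    unfolding A_def by (rule CollectI, rule exI[of _ 0], rule exI[of _ 0]) simp
  then have "0 \<in> A" by (simp add: onorm_zero)
  have le: "Sup A \<le> sqrt 2 * M" using up ne by (intro cSup_least) auto
  have ge: "sqrt 2 * M \<le> Sup A"
  proof (cases "M = 0")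
    case True
    then show ?thesis using cSup_upper[OF \<open>0 \<in> A\<close> bdd] by simp
  next
    case False
    then have Mp: "M > 0" using M0 by simp
    show ?thesis
    proof (rule field_le_epsilon)
      fix e :: real assume e: "e > 0"
      obtain x c where x: "norm x = 1" and nc: "cmod c = M" and ap: "norm (T x - scaleC c x) \<le> e / sqrt 2"
        using approx_eig[OF bc adj nor, of "e / sqrt 2"] Mp e by (auto simp: M_def)
      have ap2: "norm (S x - scaleC (cnj c) x) \<le> e / sqrt 2"
        using ap normal_shift[OF adj nor, of x c] by simp
      define \<zeta> where "\<zeta> = cnj c / complex_of_real (M * sqrt 2)"
      define \<eta> where "\<eta> = c / complex_of_real (M * sqrt 2)"
      have nz: "cmod \<zeta> = 1 / sqrt 2" "cmod \<eta> = 1 / sqrt 2"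
        using Mp nc by (auto simp: \<zeta>_def \<eta>_def norm_divide norm_mult)
      have cond: "(cmod \<zeta>)\<^sup>2 + (cmod \<eta>)\<^sup>2 \<le> 1" using nz by (simp add: power_divide)
      have r: "2 * M^2 / (M * sqrt 2) = sqrt 2 * M"
      proof -
        have "(sqrt 2 * M) * (M * sqrt 2) = (sqrt 2 * sqrt 2) * M^2" by (simp add: power2_eq_square ac_simps)
        also have "\<dots> = 2 * M^2" by simp
        finally have e: "2 * M^2 = (sqrt 2 * M) * (M * sqrt 2)" by simp
        have "M * sqrt 2 \<noteq> 0" using Mp by simp
        then show ?thesis by (simp add: divide_eq_eq e)
      qed
      have cc: "c * cnj c = complex_of_real (M^2)"
        using complex_norm_square[of c] nc by simp
      have coef: "\<zeta> * c + \<eta> * cnj c = complex_of_real (sqrt 2 * M)"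
      proof -
        have "\<zeta> * c + \<eta> * cnj c = (c * cnj c + c * cnj c) / complex_of_real (M * sqrt 2)"
          by (simp add: \<zeta>_def \<eta>_def add_divide_distrib mult.commute)
        also have "c * cnj c + c * cnj c = complex_of_real (2 * M^2)" by (simp add: cc)
        also have "complex_of_real (2 * M^2) / complex_of_real (M * sqrt 2) = complex_of_real (2 * M^2 / (M * sqrt 2))"
          by (rule of_real_divide[symmetric])
        finally show ?thesis by (simp only: r)
      qed
      define F where "F = (\<lambda>x. scaleC \<zeta> (T x) + scaleC \<eta> (S x))"
      have inA: "onorm F \<in> A" using cond unfolding A_def F_def by blast
      define R where "R = scaleC \<zeta> (T x - scaleC c x) + scaleC \<eta> (S x - scaleC (cnj c) x)"
      have 1: "scaleC \<zeta> (T x - scaleC c x) = scaleC \<zeta> (T x) - scaleC (\<zeta> * c) x"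
        by (simp only: scaleC_diff_right scaleC_scaleC)
      have 2: "scaleC \<eta> (S x - scaleC (cnj c) x) = scaleC \<eta> (S x) - scaleC (\<eta> * cnj c) x"
        by (simp only: scaleC_diff_right scaleC_scaleC)
      have 3: "scaleC (\<zeta> * c + \<eta> * cnj c) x = scaleC (\<zeta> * c) x + scaleC (\<eta> * cnj c) x"
        by (rule scaleC_add_left)
      have Fx: "F x = scaleC (\<zeta> * c + \<eta> * cnj c) x + R"
        unfolding F_def R_def 1 2 3 by (simp add: algebra_simps)
      have s2: "sqrt 2 * sqrt 2 = 2" by simp
      have h: "1 / sqrt 2 * (e / sqrt 2) = e / 2"
      proof -
        have "1 / sqrt 2 * (e / sqrt 2) = e / (sqrt 2 * sqrt 2)" by simp
        then show ?thesis by (simp only: s2)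
      qed
      have "norm R \<le> norm (scaleC \<zeta> (T x - scaleC c x)) + norm (scaleC \<eta> (S x - scaleC (cnj c) x))"
        unfolding R_def by (rule norm_triangle_ineq)
      also have "norm (scaleC \<zeta> (T x - scaleC c x)) = 1 / sqrt 2 * norm (T x - scaleC c x)"
        by (simp only: norm_scaleC nz)
      also have "norm (scaleC \<eta> (S x - scaleC (cnj c) x)) = 1 / sqrt 2 * norm (S x - scaleC (cnj c) x)"
        by (simp only: norm_scaleC nz)
      also have "1 / sqrt 2 * norm (T x - scaleC c x) + 1 / sqrt 2 * norm (S x - scaleC (cnj c) x)
          \<le> 1 / sqrt 2 * (e / sqrt 2) + 1 / sqrt 2 * (e / sqrt 2)"
        using ap ap2 by (intro add_mono mult_left_mono) auto
      also have "\<dots> = e" by (simp add: h)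
      finally have err: "norm R \<le> e" .
      have nv: "norm (scaleC (\<zeta> * c + \<eta> * cnj c) x) = sqrt 2 * M"
        unfolding coef norm_scaleC x norm_of_real using Mp by simp
      have "sqrt 2 * M - e \<le> norm (F x)"
        using norm_diff_ineq[of "scaleC (\<zeta> * c + \<eta> * cnj c) x" R] err
        unfolding Fx nv by linarith
      also have "norm (F x) \<le> onorm F"
        using onorm[OF comb_bl[OF bc adj nor, of \<zeta> \<eta>], of x] x by (simp add: F_def)
      also have "\<dots> \<le> Sup A" by (rule cSup_upper[OF inA bdd])
      finally show "sqrt 2 * M \<le> Sup A + e" by simp
    qed
  qed
  show ?thesis using le ge D by (simp add: M_def)
qed

end
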